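(* Let $B$ be an $n\times n$ skew-symmetrizable matrix, $\mathbf d=(d_1,\dots,d_n)$ positive integers, $D=\mathrm{diag}(d_1,\dots,d_n)$, and let $C^t=(c^t_{ij})$ be the $C$-matrices of the $(\mathbf d,\mathbf z)$-cluster pattern with principal coefficients and initial seed $(\mathbf x,\mathbf y,B)$. Put $\tilde c^t_{ij}=d_i^{-1}c^t_{ij}d_j$, i.e. $\tilde C^t=D^{-1}C^tD$. Then for every vertex $t$, $\tilde C^t$ is an integer matrix and equals the $C$-matrix at $t$ of the ordinary cluster pattern with principal coefficients and initial seed $(\mathbf x,\mathbf y,BD)$.
   Context: $[a]_+=\max(a,0)$; all matrices are integer; $BD$ is again skew-symmetrizable. Mutation data: positive integers $\mathbf d$ and frozen coefficients $z_{i,s}$ ($1\le s\le d_i-1$) with $z_{i,s}=z_{i,d_i-s}$, $z_{i,0}=z_{i,d_i}=1$. For formal variables $\mathbf y,\mathbf z$, $\mathrm{Trop}(\mathbf y,\mathbf z)$ is the free abelian multiplicative group they generate with $\oplus$ the componentwise minimum of exponents. The $(\mathbf d,\mathbf z)$-mutation at $k$ acts on a skew-symmetrizable $B=(b_{ij})$ and $y$-variables by: $b'_{ij}=-b_{ij}$ if $i=k$ or $j=k$, else $b'_{ij}=b_{ij}+d_k([-b_{ik}]_+b_{kj}+b_{ik}[b_{kj}]_+)$; $y'_k=y_k^{-1}$, $y'_i=y_i(y_k^{[\varepsilon b_{ki}]_+})^{d_k}(\bigoplus_{s=0}^{d_k}z_{k,s}y_k^{\varepsilon s})^{-b_{ki}}$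 ($i\ne k$), $\varepsilon=\pm1$. $\mathbb T_n$ is the $n$-regular tree with edges labeled $1,\dots,n$, distinct labels at each vertex. A $(\mathbf d,\mathbf z)$-cluster pattern with principal coefficients assigns seeds in $\mathrm{Trop}(\mathbf y,\mathbf z)$ to vertices, related by mutation at $k$ along edges labeled $k$, with initial seed $(\mathbf x,\mathbf y,B)$ at a fixed vertex $t_0$ whose $y$-variables are the generators. Each $y^t_j$ is a Laurent monomial $\prod_iy_i^{c^t_{ij}}$ in $\mathbf y$ alone; $C^t=(c^t_{ij})$ is the $C$-matrix. The ordinary cluster pattern with principal coefficients is the special case $\mathbf d=(1,\dots,1)$ (no $\mathbf z$), with $C$-matrices defined the same way. *)

theory Defs
  imports Complex_Main
begin

text \<open>Integer matrices are functions nat => nat => int, only entries with indices < n matter.\<close>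
type_synonym imat = "nat \<Rightarrow> nat \<Rightarrow> int"

definition pos :: "int \<Rightarrow> int" where "pos a = max a 0"

definition skew_symmetrizable :: "nat \<Rightarrow> imat \<Rightarrow> bool" where
  "skew_symmetrizable n B \<longleftrightarrow>
     (\<exists>r::nat \<Rightarrow> int. (\<forall>i<n. r i > 0) \<and>
        (\<forall>i<n. \<forall>j<n. r i * B i j = - (r j * B j i)))"

text \<open>Generators of the tropical semifield Trop(y,z): Y i = y_i and Z i s = z_{i,s}.
  The identification z_{i,s} = z_{i,d_i-s} is built in by using the index min s (d_i - s).
  An element of Trop(y,z) is represented by its exponent vector; multiplication is
  addition of exponents, the tropical sum is the componentwise minimum.\<close>
datatype gen = Y nat | Z nat nat

type_synonym trop = "gen \<Rightarrow> int"

definition zgen :: "(nat \<Rightarrow> nat) \<Rightarrow> nat \<Rightarrow> nat \<Rightarrow> trop" where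
  "zgen d k s = (if s = 0 \<or> s = d k then (\<lambda>_. 0)
                 else (\<lambda>g. if g = Z k (min s (d k - s)) then 1 else 0))"

definition mut_B :: "(nat \<Rightarrow> nat) \<Rightarrow> nat \<Rightarrow> imat \<Rightarrow> imat" where
  "mut_B d k B = (\<lambda>i j. if i = k \<or> j = k then - B i j
       else B i j + int (d k) * (pos (- B i k) * B k j + B i k * pos (B k j)))"

definition mut_y :: "(nat \<Rightarrow> nat) \<Rightarrow> nat \<Rightarrow> imat \<Rightarrow> int \<Rightarrow> (nat \<Rightarrow> trop) \<Rightarrow> (nat \<Rightarrow> trop)" where
  "mut_y d k B eps y = (\<lambda>i. if i = k then (\<lambda>g. - y k g)
     else (\<lambda>g. y i g + int (d k) * pos (eps * B k i) * y k g
                - B k i * Min ((\<lambda>s. zgen d k s g + eps * int s * y k g) ` {0..d k})))"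

definition init_y :: "nat \<Rightarrow> trop" where
  "init_y = (\<lambda>j g. if g = Y j then 1 else 0)"

definition seed_at :: "(nat \<Rightarrow> nat) \<Rightarrow> imat \<Rightarrow> (nat \<times> int) list \<Rightarrow> imat \<times> (nat \<Rightarrow> trop)" where
  "seed_at d B0 ws = foldl (\<lambda>(B, y) (k, e). (mut_B d k B, mut_y d k B e y)) (B0, init_y) ws"

definition Cmat :: "(nat \<Rightarrow> nat) \<Rightarrow> imat \<Rightarrow> (nat \<times> int) list \<Rightarrow> imat" where
  "Cmat d B0 ws = (\<lambda>i j. snd (seed_at d B0 ws) j (Y i))"

definition Cmat_ord :: "imat \<Rightarrow> (nat \<times> int) list \<Rightarrow> imat" where
  "Cmat_ord B0 ws = Cmat (\<lambda>_. 1) B0 ws"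

text \<open>A vertex t of T_n is given by the reduced word of edge labels from t0
  (labels < n, no two consecutive equal); each step carries a sign choice eps = +-1.\<close>
definition valid_path :: "nat \<Rightarrow> (nat \<times> int) list \<Rightarrow> bool" where
  "valid_path n ws \<longleftrightarrow> (\<forall>p\<in>set ws. fst p < n \<and> (snd p = 1 \<or> snd p = -1)) \<and>
     (\<forall>m. Suc m < length ws \<longrightarrow> fst (ws ! m) \<noteq> fst (ws ! Suc m))"

end

theory Submission
  imports Defs
begin

lemma seed_snoc:
  "seed_at d B0 (ws @ [(k,e)]) = (mut_B d k (fst (seed_at d B0 ws)),
      mut_y d k (fst (seed_at d B0 ws)) e (snd (seed_at d B0 ws)))"
  unfolding seed_at_def by (simp split: prod.splits)

lemma Min_lin:
  "Min ((\<lambda>s. zgen d k s (Y m) + e * int s * c) ` {0..d k}) = int (d k) * min 0 (e*c)"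
proof -
  have z: "\<And>s. zgen d k s (Y m) = 0" by (simp add: zgen_def)
  show ?thesis
  proof (rule Min_eqI)
    show "finite ((\<lambda>s. zgen d k s (Y m) + e * int s * c) ` {0..d k})" by simp
  next
    fix y assume "y \<in> (\<lambda>s. zgen d k s (Y m) + e * int s * c) ` {0..d k}"
    then obtain s where s: "s \<le> d k" "y = e * int s * c" using z by auto
    show "int (d k) * min 0 (e*c) \<le> y"
    proof (cases "e*c \<ge> 0")
      case True
      have "0 \<le> (e*c) * int s" by (rule mult_nonneg_nonneg[OF True]) simp
      then show ?thesis using s True by (simp add: mult.commute mult.left_commute)
    next
      case False
      have "int (d k) * (e*c) \<le> int s * (e*c)"
        using s(1) False by (intro mult_right_mono_neg) auto
      then show ?thesis using s False by (simp add: mult.commute mult.left_commute)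
    qed
  next
    show "int (d k) * min 0 (e*c) \<in> (\<lambda>s. zgen d k s (Y m) + e * int s * c) ` {0..d k}"
    proof (cases "e*c \<ge> 0")
      case True
      then show ?thesis using z by (auto intro!: image_eqI[where x=0])
    next
      case False
      then show ?thesis using z by (auto intro!: image_eqI[where x="d k"])
    qed
  qed
qed

lemma ymut_Y:
  "mut_y d k B e y i (Y m) = (if i = k then - y k (Y m) else
     y i (Y m) + int (d k) * pos (e * B k i) * y k (Y m) - B k i * (int (d k) * min 0 (e * y k (Y m))))"
  by (simp add: mut_y_def Min_lin)

lemma eps_indep:
  assumes "e = 1 \<or> e = -1"
  shows "pos (e*b)*c - b*min 0 (e*c) = pos b * c - b * min 0 (c::int)"
  using assms
  by (cases "b \<ge> 0"; cases "c \<ge> 0") (auto simp: pos_def max_def min_def algebra_simps)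

lemma pos_mult: "pos (x * int a) = pos x * int a"
  by (cases "x \<ge> 0") (auto simp: pos_def max_def mult_le_0_iff)

lemma min_scale: "(r::rat) \<ge> 0 \<Longrightarrow> min 0 (x * r) = min 0 x * r"
proof (cases "x \<ge> 0")
  case True
  assume r: "r \<ge> 0"
  then show ?thesis using True by (simp add: min_def mult_nonneg_nonneg)
next
  case False
  assume r: "r \<ge> 0"
  have "x * r \<le> 0" using False r by (intro mult_nonpos_nonneg) auto
  then show ?thesis using False by (simp add: min_def)
qed

lemma alg:
  fixes dm di dk Y1 Y2 C C2 M M2 P Bq :: rat
  assumes "dm \<noteq> 0" "Y2 = Y1 * di / dm" "C2 = C * (dk / dm)" "M2 = M * (dk / dm)"
  shows "Y2 + (P * di * C2 - Bq * di * M2) = (Y1 + dk * (P * C - Bq * M)) * di / dm"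
  unfolding assms(2-4) using assms(1) by (simp add: field_simps)

lemma inv:
  assumes "map fst ws' = map fst ws" "\<forall>p\<in>set ws. snd p = 1 \<or> snd p = -1"
    "\<forall>p\<in>set ws'. snd p = 1 \<or> snd p = -1" "d m > 0"
  shows "fst (seed_at (\<lambda>_. 1) (\<lambda>i j. B i j * int (d j)) ws') = (\<lambda>i j. fst (seed_at d B ws) i j * int (d j))
    \<and> (\<forall>i. (of_int (snd (seed_at (\<lambda>_. 1) (\<lambda>i j. B i j * int (d j)) ws') i (Y m)) :: rat)
          = of_int (snd (seed_at d B ws) i (Y m)) * of_nat (d i) / of_nat (d m))"
  using assms
proof (induction ws arbitrary: ws' rule: rev_induct)
  case Nil
  then show ?case using assms(4) by (auto simp: seed_at_def init_y_def)
next
  case (snoc p ws)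
  obtain k e where p: "p = (k,e)" by (cases p)
  from snoc.prems(1) have "ws' \<noteq> []" by auto
  then obtain ws0 p' where ws': "ws' = ws0 @ [p']" by (metis rev_exhaust)
  obtain k' e' where p': "p' = (k',e')" by (cases p')
  have kk: "k' = k" and mf: "map fst ws0 = map fst ws" using snoc.prems(1) ws' p p' by auto
  have e: "e = 1 \<or> e = -1" using snoc.prems(2) p by auto
  have e': "e' = 1 \<or> e' = -1" using snoc.prems(3) ws' p' by auto
  have IH: "fst (seed_at (\<lambda>_. 1) (\<lambda>i j. B i j * int (d j)) ws0) = (\<lambda>i j. fst (seed_at d B ws) i j * int (d j))"
    "\<And>i. (of_int (snd (seed_at (\<lambda>_. 1) (\<lambda>i j. B i j * int (d j)) ws0) i (Y m)) :: rat)
          = of_int (snd (seed_at d B ws) i (Y m)) * of_nat (d i) / of_nat (d m)"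
    using snoc.IH[OF mf] snoc.prems ws' by auto
  define B1 where "B1 = fst (seed_at d B ws)"
  define y1 where "y1 = snd (seed_at d B ws)"
  define y2 where "y2 = snd (seed_at (\<lambda>_. 1) (\<lambda>i j. B i j * int (d j)) ws0)"
  have IHB: "fst (seed_at (\<lambda>_. 1) (\<lambda>i j. B i j * int (d j)) ws0) = (\<lambda>i j. B1 i j * int (d j))"
    using IH(1) B1_def by simp
  have IHy: "\<And>i. (of_int (y2 i (Y m)) :: rat) = of_int (y1 i (Y m)) * of_nat (d i) / of_nat (d m)"
    using IH(2) y1_def y2_def by simp
  have Bpart: "mut_B (\<lambda>_. 1) k (\<lambda>i j. B1 i j * int (d j)) = (\<lambda>i j. mut_B d k B1 i j * int (d j))"
  proof (intro ext)
    fix i j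
    have a: "- (B1 i k * int (d k)) = (- B1 i k) * int (d k)" by simp
    show "mut_B (\<lambda>_. 1) k (\<lambda>i j. B1 i j * int (d j)) i j = mut_B d k B1 i j * int (d j)"
      unfolding mut_B_def a pos_mult by (simp add: algebra_simps)
  qed
  have ypart: "(of_int (mut_y (\<lambda>_. 1) k (\<lambda>i j. B1 i j * int (d j)) e' y2 i (Y m)) :: rat)
      = of_int (mut_y d k B1 e y1 i (Y m)) * of_nat (d i) / of_nat (d m)" for i
  proof (cases "i = k")
    case True
    then show ?thesis using IHy[of k] by (simp add: ymut_Y)
  next
    case False
    define b where "b = B1 k i"
    define c where "c = y1 k (Y m)"
    define c2 where "c2 = y2 k (Y m)"
    have c2: "(of_int c2 :: rat) = of_int c * (of_nat (d k) / of_nat (d m))"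
      using IHy[of k] c_def c2_def by simp
    have L: "mut_y (\<lambda>_. 1) k (\<lambda>i j. B1 i j * int (d j)) e' y2 i (Y m)
        = y2 i (Y m) + (pos (b * int (d i)) * c2 - (b * int (d i)) * min 0 c2)"
    proof -
      have "mut_y (\<lambda>_. 1) k (\<lambda>i j. B1 i j * int (d j)) e' y2 i (Y m)
        = y2 i (Y m) + (pos (e' * (b * int (d i))) * c2 - (b * int (d i)) * min 0 (e' * c2))"
        using False by (simp add: ymut_Y b_def c2_def)
      then show ?thesis using eps_indep[OF e'] by simp
    qed
    have R: "mut_y d k B1 e y1 i (Y m) = y1 i (Y m) + int (d k) * (pos b * c - b * min 0 c)"
    proof -
      have "mut_y d k B1 e y1 i (Y m) = y1 i (Y m) + int (d k) * (pos (e*b) * c - b * min 0 (e*c))"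
        using False by (simp add: ymut_Y b_def c_def algebra_simps)
      then show ?thesis using eps_indep[OF e] by simp
    qed
    have mn: "(of_int (min 0 c2) :: rat) = of_int (min 0 c) * (of_nat (d k) / of_nat (d m))"
      using c2 min_scale[of "of_nat (d k) / of_nat (d m)" "of_int c"] by (simp only: of_int_min) simp
    have dm: "(of_nat (d m) :: rat) \<noteq> 0" using snoc.prems(4) by simp
    have Y: "(of_int (y2 i (Y m)) :: rat) = of_int (y1 i (Y m)) * of_nat (d i) / of_nat (d m)"
      using IHy[of i] .
    show ?thesis
      unfolding L R pos_mult of_int_add of_int_diff of_int_mult of_int_of_nat_eq
      by (rule alg[OF dm Y c2 mn])
  qed
  show ?case
    unfolding ws' p p' kk seed_snoc IHB
    using Bpart ypart by (simp add: B1_def y1_def y2_def)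
qed

theorem mainTheorem8:
  fixes n :: nat and B :: imat and d :: "nat \<Rightarrow> nat"
    and ws ws' :: "(nat \<times> int) list"
  assumes "skew_symmetrizable n B"
    and "\<forall>i<n. d i > 0"
    and "valid_path n ws" and "valid_path n ws'"
    and "map fst ws' = map fst ws"
  shows "\<forall>i<n. \<forall>j<n.
     (of_int (Cmat d B ws i j) * of_nat (d j) / of_nat (d i) :: rat)
       = of_int (Cmat_ord (\<lambda>i j. B i j * int (d j)) ws' i j)"
proof (intro allI impI)
  fix i j assume i: "i < n" and j: "j < n"
  have s1: "\<forall>p\<in>set ws. snd p = 1 \<or> snd p = -1" and s2: "\<forall>p\<in>set ws'. snd p = 1 \<or> snd p = -1"
    using assms(3,4) by (auto simp: valid_path_def)
  have "d i > 0" using assms(2) i by auto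
  from inv[of ws' ws d i B, OF assms(5) s1 s2 this] show "(of_int (Cmat d B ws i j) * of_nat (d j) / of_nat (d i) :: rat)
       = of_int (Cmat_ord (\<lambda>i j. B i j * int (d j)) ws' i j)"
    by (simp add: Cmat_ord_def Cmat_def)
qed

end
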